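(* Let $k\ge 0$ be an integer. Every maximal simplex $\sigma$ of $\mathrm{VR}(\mathbb{Z}^2;k)$ is of the form $\sigma=B_{\mathbb{R}^2}[c,\tfrac{k}{2}]\cap\mathbb{Z}^2$, where, for some $i,j\in\mathbb{Z}$, $c=(i,j)$ or $c=(i+\tfrac12,j+\tfrac12)$ if $k$ is even, and $c=(i+\tfrac12,j)$ or $c=(i,j+\tfrac12)$ if $k$ is odd.
   Context: $\mathbb{Z}^2$ and $\mathbb{R}^2$ carry the $l^1$ metric $d((x,y),(x',y'))=|x-x'|+|y-y'|$, and $B_{\mathbb{R}^2}[c,r]=\{p\in\mathbb{R}^2: d(p,c)\le r\}$ is the closed $l^1$ ball. $\mathrm{VR}(X;r)$ is the simplicial complex on vertex set $X$ whose simplices are the finite nonempty subsets of diameter at most $r$; a maximal simplex is one not properly contained in another simplex. *)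

theory Defs
  imports "HOL-Analysis.Analysis"
begin

definition l1_dist :: "real \<times> real \<Rightarrow> real \<times> real \<Rightarrow> real" where
  "l1_dist p q = \<bar>fst p - fst q\<bar> + \<bar>snd p - snd q\<bar>"

definition int_pt :: "int \<times> int \<Rightarrow> real \<times> real" where
  "int_pt p = (real_of_int (fst p), real_of_int (snd p))"

definition Z2 :: "(real \<times> real) set" where
  "Z2 = range int_pt"

definition l1_cball :: "real \<times> real \<Rightarrow> real \<Rightarrow> (real \<times> real) set" where
  "l1_cball c r = {p. l1_dist p c \<le> r}"

definition vr_simplex :: "('a \<Rightarrow> 'a \<Rightarrow> real) \<Rightarrow> 'a set \<Rightarrow> real \<Rightarrow> 'a set \<Rightarrow> bool" where
  "vr_simplex d X r \<sigma> \<longleftrightarrow> \<sigma> \<subseteq> X \<and> finite \<sigma> \<and> \<sigma> \<noteq> {} \<and> (\<forall>p\<in>\<sigma>. \<forall>q\<in>\<sigma>. d p q \<le> r)"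

definition vr_maximal_simplex :: "('a \<Rightarrow> 'a \<Rightarrow> real) \<Rightarrow> 'a set \<Rightarrow> real \<Rightarrow> 'a set \<Rightarrow> bool" where
  "vr_maximal_simplex d X r \<sigma> \<longleftrightarrow> vr_simplex d X r \<sigma> \<and>
     (\<forall>\<tau>. vr_simplex d X r \<tau> \<and> \<sigma> \<subseteq> \<tau> \<longrightarrow> \<tau> = \<sigma>)"

end

theory Submission
  imports Defs
begin

lemma l1_le_iff:
  "l1_dist p c \<le> r \<longleftrightarrow>
     \<bar>(fst p + snd p) - (fst c + snd c)\<bar> \<le> r \<and> \<bar>(fst p - snd p) - (fst c - snd c)\<bar> \<le> r"
  unfolding l1_dist_def by (auto simp: abs_if split: if_splits)

lemma ball_Z2_finite: "finite (l1_cball c r \<inter> Z2)"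
proof -
  have "l1_cball c r \<inter> Z2 \<subseteq> int_pt ` ({\<lfloor>fst c - r\<rfloor>..\<lceil>fst c + r\<rceil>} \<times> {\<lfloor>snd c - r\<rfloor>..\<lceil>snd c + r\<rceil>})"
  proof
    fix p assume "p \<in> l1_cball c r \<inter> Z2"
    then obtain m n where p: "p = int_pt (m, n)" and d: "l1_dist p c \<le> r"
      unfolding Z2_def l1_cball_def by auto
    have h: "\<bar>real_of_int m - fst c\<bar> + \<bar>real_of_int n - snd c\<bar> \<le> r"
      using d p by (simp add: l1_dist_def int_pt_def)
    have "m \<ge> \<lfloor>fst c - r\<rfloor>" using h by (simp add: floor_le_iff)
    moreover have "m \<le> \<lceil>fst c + r\<rceil>" using h by (simp add: le_ceiling_iff)
    moreover have "n \<ge> \<lfloor>snd c - r\<rfloor>" using h by (simp add: floor_le_iff)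
    moreover have "n \<le> \<lceil>snd c + r\<rceil>" using h by (simp add: le_ceiling_iff)
    ultimately show "p \<in> int_pt ` ({\<lfloor>fst c - r\<rfloor>..\<lceil>fst c + r\<rceil>} \<times> {\<lfloor>snd c - r\<rfloor>..\<lceil>snd c + r\<rceil>})"
      using p by auto
  qed
  then show ?thesis by (rule finite_subset) simp
qed

theorem proposition4p2:
  fixes k :: nat and \<sigma> :: "(real \<times> real) set"
  assumes "vr_maximal_simplex l1_dist Z2 (real k) \<sigma>"
  shows "\<exists>c i j. \<sigma> = l1_cball c (real k / 2) \<inter> Z2 \<and>
           (if even k
            then c = (real_of_int i, real_of_int j) \<or> c = (real_of_int i + 1/2, real_of_int j + 1/2)
            else c = (real_of_int i + 1/2, real_of_int j) \<or> c = (real_of_int i, real_of_int j + 1/2))"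
proof -
  have sub: "\<sigma> \<subseteq> Z2" and fin: "finite \<sigma>" and ne: "\<sigma> \<noteq> {}"
    and dist: "\<And>p q. p \<in> \<sigma> \<Longrightarrow> q \<in> \<sigma> \<Longrightarrow> l1_dist p q \<le> real k"
    and max: "\<And>\<tau>. vr_simplex l1_dist Z2 (real k) \<tau> \<Longrightarrow> \<sigma> \<subseteq> \<tau> \<Longrightarrow> \<tau> = \<sigma>"
    using assms unfolding vr_maximal_simplex_def vr_simplex_def by blast+
  define U where "U = (\<lambda>p::real\<times>real. fst p + snd p)"
  define V where "V = (\<lambda>p::real\<times>real. fst p - snd p)"
  define a where "a = Min (U ` \<sigma>)"
  define b where "b = Min (V ` \<sigma>)"
  have "a \<in> U ` \<sigma>" unfolding a_def using fin ne by simp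
  then obtain qa where qa: "qa \<in> \<sigma>" "a = U qa" by auto
  have "b \<in> V ` \<sigma>" unfolding b_def using fin ne by simp
  then obtain qb where qb: "qb \<in> \<sigma>" "b = V qb" by auto
  obtain A where A: "a = real_of_int A"
  proof -
    obtain m n where "qa = int_pt (m, n)" using qa sub unfolding Z2_def by auto
    then show ?thesis using qa that[of "m + n"] unfolding U_def int_pt_def by simp
  qed
  obtain B where B: "b = real_of_int B"
  proof -
    obtain m n where "qb = int_pt (m, n)" using qb sub unfolding Z2_def by auto
    then show ?thesis using qb that[of "m - n"] unfolding V_def int_pt_def by simp
  qed
  define c where "c = ((a + b + real k) / 2, (a - b) / 2)"
  define S where "S = l1_cball c (real k / 2) \<inter> Z2"
  have "\<sigma> \<subseteq> S"
  proof
    fix p assume p: "p \<in> \<sigma>"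
    have "U p \<ge> a" unfolding a_def using fin p by simp
    have "V p \<ge> b" unfolding b_def using fin p by simp
    have "l1_dist p qa \<le> real k" "l1_dist p qb \<le> real k" using dist p qa qb by auto
    then have "\<bar>U p - U qa\<bar> \<le> real k" "\<bar>V p - V qb\<bar> \<le> real k"
      unfolding U_def V_def l1_le_iff by auto
    moreover have "fst c + snd c = a + real k / 2" "fst c - snd c = b + real k / 2"
      unfolding c_def by (simp_all add: field_simps)
    ultimately have "l1_dist p c \<le> real k / 2"
      unfolding l1_le_iff using \<open>U p \<ge> a\<close> \<open>V p \<ge> b\<close> qa qb
      unfolding U_def V_def by (simp only: abs_le_iff) arith
    then show "p \<in> S" using p sub unfolding S_def l1_cball_def by auto
  qed
  have "vr_simplex l1_dist Z2 (real k) S"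
    unfolding vr_simplex_def
  proof (intro conjI ballI)
    show "S \<subseteq> Z2" "finite S" unfolding S_def using ball_Z2_finite by auto
    show "S \<noteq> {}" using \<open>\<sigma> \<subseteq> S\<close> ne by auto
    fix p q assume "p \<in> S" "q \<in> S"
    then have "l1_dist p c \<le> real k / 2" "l1_dist q c \<le> real k / 2"
      unfolding S_def l1_cball_def by auto
    then show "l1_dist p q \<le> real k"
      unfolding l1_le_iff by (auto simp: abs_if split: if_splits)
  qed
  then have eq: "\<sigma> = S" using max \<open>\<sigma> \<subseteq> S\<close> by auto
  have cc: "c = (real_of_int (A + B + int k) / 2, real_of_int (A - B) / 2)"
    unfolding c_def A B by simp
  have par: "if even k
            then c = (real_of_int i, real_of_int j) \<or> c = (real_of_int i + 1/2, real_of_int j + 1/2)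
            else c = (real_of_int i + 1/2, real_of_int j) \<or> c = (real_of_int i, real_of_int j + 1/2)"
    if "i = (A + B + int k) div 2" "j = (A - B) div 2" for i j
  proof -
    have e1: "real_of_int (A + B + int k) = 2 * real_of_int i + of_int ((A + B + int k) mod 2)"
      using that by (metis div_mult_mod_eq mult.commute of_int_add of_int_mult of_int_numeral)
    have e2: "real_of_int (A - B) = 2 * real_of_int j + of_int ((A - B) mod 2)"
      using that by (metis div_mult_mod_eq mult.commute of_int_add of_int_mult of_int_numeral)
    have m1: "(A + B + int k) mod 2 = 0 \<or> (A + B + int k) mod 2 = 1" by presburger
    have m2: "(A - B) mod 2 = 0 \<or> (A - B) mod 2 = 1" by presburger
    have rel: "even k \<longleftrightarrow> ((A + B + int k) mod 2 = (A - B) mod 2)" by presburger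
    show ?thesis using m1 m2 rel unfolding cc e1 e2 by auto
  qed
  show ?thesis using eq par unfolding S_def by blast
qed

end
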